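(* Suppose the background potential $V(w)=\sum_{k\ge1}\frac{\overline{V_k^{\mathrm{out}}}w^{-k}}{k}+\sum_{k\ge1}\frac{V_k^{\mathrm{in}}w^k}{k}$ is analytic in an open neighborhood of the unit circle $\mathbb{T}$. Then the Stanley–Cauchy kernel $\Pi=\Pi(\overline{V^{\mathrm{out}}},V^{\mathrm{in}}\,|\,\tfrac{1}{-\varepsilon_1\varepsilon_2})=\prod_{k\ge1}\exp\big(\frac{\overline{V_k^{\mathrm{out}}}V_k^{\mathrm{in}}}{-\varepsilon_1\varepsilon_2k}\big)$, regarded as a function of the variables $\overline{V^{\mathrm{out}}_k}$ with $V^{\mathrm{in}}_k$ fixed, lies in the domain of definition of the operator $\langle0|\mathcal{L}^{\mathrm{out}}(\varepsilon_2,\varepsilon_1)^\ell|0\rangle$ for every $\ell\in\mathbb{N}$.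
   Context: Fix real $\varepsilon_2<0<\varepsilon_1$. On $\overline{\mathcal{F}^{\mathrm{out}}}=\mathbb{C}[\overline{V_1^{\mathrm{out}}},\overline{V_2^{\mathrm{out}}},\dots]$ (and its Hilbert space completion for the inner product in which multiplication by $\overline{V_k^{\mathrm{out}}}$ has adjoint $\overline{V_{-k}^{\mathrm{out}}}:=(-\varepsilon_1\varepsilon_2)k\,\partial/\partial\overline{V_k^{\mathrm{out}}}$, with $\overline{V_0^{\mathrm{out}}}=0$), define $\mathcal{L}^{\mathrm{out}}_{h_+,h_-}=\overline{V^{\mathrm{out}}_{h_--h_+}}+(\varepsilon_1+\varepsilon_2)h_+\delta_{h_+h_-}$ for $h_\pm\in\mathbb{N}$ and $\langle0|\mathcal{L}^{\mathrm{out}}(\varepsilon_2,\varepsilon_1)^\ell|0\rangle=\sum_{h_1,\dots,h_{\ell-1}\ge0}\mathcal{L}^{\mathrm{out}}_{0,h_1}\mathcal{L}^{\mathrm{out}}_{h_1,h_2}\cdots\mathcal{L}^{\mathrm{out}}_{h_{\ell-1},0}$ (the vacuum matrix element of the $\ell$-th power of the Nazarov–Sklyanin Lax operator). Being in the domain means the resulting series applied to $\Pi$ converges in the Hilbert space completion. *)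

theory Defs
  imports "HOL-Analysis.Analysis"
begin

(* Fock space F^out = C[x_1, x_2, ...] with x_k = conj(V_k^out).
   A (formal) element is given by its coefficient function on monomials
   x^m = prod_k x_k^(m k), m finitely supported with m 0 = 0.
   hb = -eps1*eps2 > 0. *)

type_synonym fock = "(nat \<Rightarrow> nat) \<Rightarrow> complex"

definition fock_idx :: "(nat \<Rightarrow> nat) set" where
  "fock_idx = {m. finite {k. m k \<noteq> 0} \<and> m 0 = 0}"

(* squared norm of the monomial x^m: multiplication by x_k has adjoint hb*k*d/dx_k *)
definition fock_wt :: "real \<Rightarrow> (nat \<Rightarrow> nat) \<Rightarrow> real" where
  "fock_wt hb m = (\<Prod>k\<in>{k. m k \<noteq> 0}. (hb * real k) ^ (m k) * fact (m k))"

definition in_fock :: "real \<Rightarrow> fock \<Rightarrow> bool" where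
  "in_fock hb c \<longleftrightarrow> (\<lambda>m. (cmod (c m))\<^sup>2 * fock_wt hb m) summable_on fock_idx"

definition fock_norm :: "real \<Rightarrow> fock \<Rightarrow> real" where
  "fock_norm hb c = sqrt (infsum (\<lambda>m. (cmod (c m))\<^sup>2 * fock_wt hb m) fock_idx)"

definition fock_has_sum :: "real \<Rightarrow> ('i \<Rightarrow> fock) \<Rightarrow> 'i set \<Rightarrow> fock \<Rightarrow> bool" where
  "fock_has_sum hb f I S \<longleftrightarrow> in_fock hb S \<and> (\<forall>i\<in>I. in_fock hb (f i)) \<and>
     (\<forall>e>0. \<exists>F0. finite F0 \<and> F0 \<subseteq> I \<and>
        (\<forall>F. finite F \<and> F0 \<subseteq> F \<and> F \<subseteq> I \<longrightarrow>
              fock_norm hb (\<lambda>m. S m - (\<Sum>i\<in>F. f i m)) < e))"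

(* multiplication by x_n *)
definition fock_raise :: "nat \<Rightarrow> fock \<Rightarrow> fock" where
  "fock_raise n c = (\<lambda>m. if 0 < m n then c (m(n := m n - 1)) else 0)"

(* hb * n * d/dx_n *)
definition fock_lower :: "real \<Rightarrow> nat \<Rightarrow> fock \<Rightarrow> fock" where
  "fock_lower hb n c = (\<lambda>m. complex_of_real (hb * real n * real (m n + 1)) * c (m(n := m n + 1)))"

(* conj(V_j^out) for j in Z: j>0 multiplication, j<0 adjoint, j=0 zero *)
definition Vbar_out :: "real \<Rightarrow> int \<Rightarrow> fock \<Rightarrow> fock" where
  "Vbar_out hb j c = (if 0 < j then fock_raise (nat j) c
                      else if j < 0 then fock_lower hb (nat (- j)) c
                      else (\<lambda>_. 0))"

definition L_out :: "real \<Rightarrow> real \<Rightarrow> nat \<Rightarrow> nat \<Rightarrow> fock \<Rightarrow> fock" where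
  "L_out e1 e2 h h' c = (\<lambda>m. Vbar_out (- e1 * e2) (int h' - int h) c m
       + (if h = h' then complex_of_real ((e1 + e2) * real h) * c m else 0))"

fun lax_chain :: "real \<Rightarrow> real \<Rightarrow> nat list \<Rightarrow> fock \<Rightarrow> fock" where
  "lax_chain e1 e2 (a # b # rest) c = L_out e1 e2 a b (lax_chain e1 e2 (b # rest) c)"
| "lax_chain e1 e2 xs c = c"

(* the term indexed by (h_1,...,h_{l-1}); for l = 0 the operator is the identity *)
definition vac_term :: "real \<Rightarrow> real \<Rightarrow> nat \<Rightarrow> nat list \<Rightarrow> fock \<Rightarrow> fock" where
  "vac_term e1 e2 l hs c = (if l = 0 then c else lax_chain e1 e2 (0 # hs @ [0]) c)"

(* c lies in the domain of <0| L^out(e2,e1)^l |0> *)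
definition in_vac_domain :: "real \<Rightarrow> real \<Rightarrow> nat \<Rightarrow> fock \<Rightarrow> bool" where
  "in_vac_domain e1 e2 l c \<longleftrightarrow> in_fock (- e1 * e2) c \<and>
     (\<exists>S. fock_has_sum (- e1 * e2) (\<lambda>hs. vac_term e1 e2 l hs c) {hs. length hs = l - 1} S)"

(* Stanley-Cauchy kernel prod_k exp(x_k y_k / (hb k)), expanded in monomials x^m *)
definition stanley_cauchy :: "real \<Rightarrow> (nat \<Rightarrow> complex) \<Rightarrow> fock" where
  "stanley_cauchy hb vin m = (\<Prod>k\<in>{k. m k \<noteq> 0}.
       (vin k / complex_of_real (hb * real k)) ^ (m k) / of_nat (fact (m k)))"

definition potential :: "(nat \<Rightarrow> complex) \<Rightarrow> (nat \<Rightarrow> complex) \<Rightarrow> complex \<Rightarrow> complex" where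
  "potential vout vin w =
     (\<Sum>k. vout (Suc k) * inverse w ^ Suc k / of_nat (Suc k))
   + (\<Sum>k. vin (Suc k) * w ^ Suc k / of_nat (Suc k))"

end

theory Submission
  imports Defs
begin

definition fbnd :: "real \<Rightarrow> ((nat\<Rightarrow>nat) \<Rightarrow> real) \<Rightarrow> fock \<Rightarrow> real \<Rightarrow> bool" where
  "fbnd hb w f B \<longleftrightarrow> (\<forall>A. finite A \<and> A \<subseteq> fock_idx \<longrightarrow>
      (\<Sum>m\<in>A. (cmod (f m))\<^sup>2 * fock_wt hb m * w m) \<le> B)"

lemma fock_wt_nonneg: "hb > 0 \<Longrightarrow> fock_wt hb m \<ge> 0"
  unfolding fock_wt_def by (intro prod_nonneg) auto

lemma fock_wt_pos: "hb > 0 \<Longrightarrow> m \<in> fock_idx \<Longrightarrow> fock_wt hb m > 0"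
  unfolding fock_wt_def fock_idx_def
proof (intro prod_pos)
  fix k assume "k \<in> {k. m k \<noteq> 0}" "hb > 0" "m \<in> {m. finite {k. m k \<noteq> 0} \<and> m 0 = 0}"
  then have "k > 0" by (cases k) auto
  then show "0 < (hb * real k) ^ m k * fact (m k)" using \<open>hb>0\<close> by simp
qed

lemma L2_set_sum_ineq:
  "L2_set (\<lambda>m. \<Sum>i\<in>G. g i m) A \<le> (\<Sum>i\<in>G. L2_set (g i) A)"
proof (induction G rule: infinite_finite_induct)
  case (insert x F)
  have "L2_set (\<lambda>m. \<Sum>i\<in>insert x F. g i m) A = L2_set (\<lambda>m. g x m + (\<Sum>i\<in>F. g i m)) A"
    using insert by simp
  also have "\<dots> \<le> L2_set (g x) A + L2_set (\<lambda>m. \<Sum>i\<in>F. g i m) A"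
    by (rule L2_set_triangle_ineq)
  also have "\<dots> \<le> L2_set (g x) A + (\<Sum>i\<in>F. L2_set (g i) A)" using insert by simp
  finally show ?case using insert by simp
qed (auto simp: L2_set_def)

lemma fbnd_in_fock:
  assumes "hb > 0" "fbnd hb (\<lambda>_. 1) f B"
  shows "in_fock hb f" "infsum (\<lambda>m. (cmod (f m))\<^sup>2 * fock_wt hb m) fock_idx \<le> B"
proof -
  have s: "(\<lambda>m. (cmod (f m))\<^sup>2 * fock_wt hb m) summable_on fock_idx"
    apply (rule nonneg_bdd_above_summable_on)
    using assms fock_wt_nonneg apply simp
    apply (rule bdd_aboveI[where M=B]) using assms(2) unfolding fbnd_def by auto
  then show "in_fock hb f" unfolding in_fock_def .
  show "infsum (\<lambda>m. (cmod (f m))\<^sup>2 * fock_wt hb m) fock_idx \<le> B"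
    by (rule infsum_le_finite_sums[OF s]) (use assms(2) in \<open>auto simp: fbnd_def\<close>)
qed

lemma sqrt_sum_sq_L2:
  assumes "hb > 0"
  shows "(\<Sum>m\<in>A. (cmod (g m))\<^sup>2 * fock_wt hb m) = (L2_set (\<lambda>m. cmod (g m) * sqrt (fock_wt hb m)) A)\<^sup>2"
  unfolding L2_set_def using fock_wt_nonneg[OF assms]
  by (simp add: sum_nonneg power_mult_distrib)

lemma finite_minkowski:
  assumes hb: "hb > 0" and "finite G" and "\<And>i. i \<in> G \<Longrightarrow> (\<Sum>m\<in>A. (cmod (f i m))\<^sup>2 * fock_wt hb m) \<le> (b i)\<^sup>2"
    and "\<And>i. i \<in> G \<Longrightarrow> b i \<ge> 0"
  shows "(\<Sum>m\<in>A. (cmod (\<Sum>i\<in>G. f i m))\<^sup>2 * fock_wt hb m) \<le> (\<Sum>i\<in>G. b i)\<^sup>2"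
proof -
  let ?g = "\<lambda>i m. cmod (f i m) * sqrt (fock_wt hb m)"
  have "L2_set (\<lambda>m. cmod (\<Sum>i\<in>G. f i m) * sqrt (fock_wt hb m)) A \<le> L2_set (\<lambda>m. \<Sum>i\<in>G. ?g i m) A"
    apply (rule L2_set_mono)
    using norm_sum[of "\<lambda>i. f i _" G]
    using fock_wt_nonneg[OF hb] by (auto simp: sum_distrib_right[symmetric] intro!: mult_right_mono)
  also have "\<dots> \<le> (\<Sum>i\<in>G. L2_set (?g i) A)" by (rule L2_set_sum_ineq)
  also have "\<dots> \<le> (\<Sum>i\<in>G. b i)"
  proof (rule sum_mono)
    fix i assume i: "i \<in> G"
    have "(L2_set (?g i) A)\<^sup>2 \<le> (b i)\<^sup>2" using assms(3)[OF i] sqrt_sum_sq_L2[OF hb, where A=A and g="f i"] by simp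
    then show "L2_set (?g i) A \<le> b i" using assms(4)[OF i]
      using power2_le_imp_le by blast
  qed
  finally have "L2_set (\<lambda>m. cmod (\<Sum>i\<in>G. f i m) * sqrt (fock_wt hb m)) A \<le> (\<Sum>i\<in>G. b i)" .
  then have "(L2_set (\<lambda>m. cmod (\<Sum>i\<in>G. f i m) * sqrt (fock_wt hb m)) A)\<^sup>2 \<le> (\<Sum>i\<in>G. b i)\<^sup>2"
    by (intro power_mono) auto
  then show ?thesis using sqrt_sum_sq_L2[OF hb, where A=A and g="\<lambda>m. \<Sum>i\<in>G. f i m"] by simp
qed

lemma fock_sum_exists:
  fixes f :: "'i \<Rightarrow> fock" and b :: "'i \<Rightarrow> real"
  assumes hb: "hb > 0" and bnn: "\<And>i. i \<in> I \<Longrightarrow> b i \<ge> 0" and bs: "b summable_on I"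
    and fb: "\<And>i. i \<in> I \<Longrightarrow> fbnd hb (\<lambda>_. 1) (f i) ((b i)\<^sup>2)"
  shows "\<exists>S. fock_has_sum hb f I S"
proof -
  have fbA: "(\<Sum>m\<in>A. (cmod (f i m))\<^sup>2 * fock_wt hb m) \<le> (b i)\<^sup>2"
    if "i \<in> I" "finite A" "A \<subseteq> fock_idx" for i A
    using fb[OF that(1)] that unfolding fbnd_def by auto
  have pt: "cmod (f i m) \<le> b i / sqrt (fock_wt hb m)" if "i \<in> I" "m \<in> fock_idx" for i m
  proof -
    have w: "fock_wt hb m > 0" using fock_wt_pos[OF hb that(2)] .
    have "(cmod (f i m))\<^sup>2 * fock_wt hb m \<le> (b i)\<^sup>2" using fbA[OF that(1), of "{m}"] that by simp
    then have "(cmod (f i m) * sqrt (fock_wt hb m))\<^sup>2 \<le> (b i)\<^sup>2" using w by (simp add: power_mult_distrib)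
    then have "cmod (f i m) * sqrt (fock_wt hb m) \<le> b i" using bnn[OF that(1)] power2_le_imp_le by blast
    then show ?thesis using w by (simp add: pos_le_divide_eq)
  qed
  have summ: "(\<lambda>i. f i m) summable_on G" if "m \<in> fock_idx" "G \<subseteq> I" for m G
  proof -
    have s1: "(\<lambda>i. b i * (1 / sqrt (fock_wt hb m))) summable_on I" by (rule summable_on_cmult_left[OF bs])
    have "(\<lambda>i. norm (f i m)) summable_on I"
    proof (rule summable_on_comparison_test[OF s1])
      fix i assume i: "i \<in> I"
      show "norm (f i m) \<le> b i * (1 / sqrt (fock_wt hb m))"
        using pt[OF i that(1)] by simp
    qed simp
    then have "(\<lambda>i. f i m) summable_on I" by (rule abs_summable_summable)
    then show ?thesis by (rule summable_on_subset[OF _ that(2)])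
  qed
  have bsG: "b summable_on G" if "G \<subseteq> I" for G using summable_on_subset[OF bs that] .
  have key: "(\<Sum>m\<in>A. (cmod (infsum (\<lambda>i. f i m) G))\<^sup>2 * fock_wt hb m) \<le> (infsum b G)\<^sup>2"
    if G: "G \<subseteq> I" and A: "finite A" "A \<subseteq> fock_idx" for G A
  proof -
    let ?phi = "\<lambda>G0. (\<Sum>m\<in>A. (cmod (\<Sum>i\<in>G0. f i m))\<^sup>2 * fock_wt hb m)"
    have lim: "(?phi \<longlongrightarrow> (\<Sum>m\<in>A. (cmod (infsum (\<lambda>i. f i m) G))\<^sup>2 * fock_wt hb m)) (finite_subsets_at_top G)"
    proof (intro tendsto_sum tendsto_mult tendsto_power tendsto_norm tendsto_const)
      fix m assume "m \<in> A"
      then have "((\<lambda>i. f i m) has_sum infsum (\<lambda>i. f i m) G) G" using summ A G by auto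
      then show "((\<lambda>G0. \<Sum>i\<in>G0. f i m) \<longlongrightarrow> infsum (\<lambda>i. f i m) G) (finite_subsets_at_top G)"
        unfolding has_sum_def .
    qed
    have ev: "\<forall>\<^sub>F G0 in finite_subsets_at_top G. ?phi G0 \<le> (infsum b G)\<^sup>2"
    proof (rule eventually_finite_subsets_at_top_weakI)
      fix G0 assume G0: "finite G0" "G0 \<subseteq> G"
      have "?phi G0 \<le> (\<Sum>i\<in>G0. b i)\<^sup>2"
        by (rule finite_minkowski[OF hb G0(1)]) (use fbA A G0 G bnn in auto)
      also have "\<dots> \<le> (infsum b G)\<^sup>2"
      proof (rule power_mono)
        show "0 \<le> sum b G0" using bnn G0 G by (auto intro: sum_nonneg)
        have "infsum b G0 \<le> infsum b G"
          by (rule infsum_mono2) (use G0 G bnn bsG in auto)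
        then show "sum b G0 \<le> infsum b G" using G0 by simp
      qed
      finally show "?phi G0 \<le> (infsum b G)\<^sup>2" .
    qed
    show ?thesis
      by (rule tendsto_upperbound[OF lim ev]) simp
  qed
  define S where "S m = infsum (\<lambda>i. f i m) I" for m
  have inS: "in_fock hb S"
  proof (rule fbnd_in_fock(1)[OF hb])
    show "fbnd hb (\<lambda>_. 1) S ((infsum b I)\<^sup>2)" unfolding fbnd_def S_def using key[of I] by auto
  qed
  have inf: "in_fock hb (f i)" if "i \<in> I" for i using fbnd_in_fock(1)[OF hb fb[OF that]] .
  have conv: "\<exists>F0. finite F0 \<and> F0 \<subseteq> I \<and> (\<forall>F. finite F \<and> F0 \<subseteq> F \<and> F \<subseteq> I \<longrightarrow>
              fock_norm hb (\<lambda>m. S m - (\<Sum>i\<in>F. f i m)) < e)" if e: "e > 0" for e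
  proof -
    have "(b has_sum infsum b I) I" using bs by simp
    then have "\<forall>\<^sub>F F in finite_subsets_at_top I. dist (sum b F) (infsum b I) < e / 2"
      unfolding has_sum_def tendsto_iff using e by (meson half_gt_zero)
    then obtain F0 where F0: "finite F0" "F0 \<subseteq> I"
      "\<forall>F. finite F \<and> F0 \<subseteq> F \<and> F \<subseteq> I \<longrightarrow> dist (sum b F) (infsum b I) < e / 2"
      unfolding eventually_finite_subsets_at_top by blast
    show ?thesis
    proof (intro exI[of _ F0] conjI allI impI F0(1,2))
      fix F assume F: "finite F \<and> F0 \<subseteq> F \<and> F \<subseteq> I"
      have split: "S m - (\<Sum>i\<in>F. f i m) = infsum (\<lambda>i. f i m) (I - F)" if "m \<in> fock_idx" for m
      proof -
        have "infsum (\<lambda>i. f i m) I = infsum (\<lambda>i. f i m) (F \<union> (I - F))" using F by (simp add: Un_absorb1)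
        also have "\<dots> = infsum (\<lambda>i. f i m) F + infsum (\<lambda>i. f i m) (I - F)"
          by (rule infsum_Un_disjoint) (use summ[OF that] F in auto)
        finally show ?thesis unfolding S_def using F by simp
      qed
      have bI: "infsum b I = sum b F + infsum b (I - F)"
      proof -
        have "infsum b I = infsum b (F \<union> (I - F))" using F by (simp add: Un_absorb1)
        also have "\<dots> = infsum b F + infsum b (I - F)"
          by (rule infsum_Un_disjoint) (use bsG F in auto)
        finally show ?thesis using F by simp
      qed
      have fb2: "fbnd hb (\<lambda>_. 1) (\<lambda>m. S m - (\<Sum>i\<in>F. f i m)) ((infsum b (I - F))\<^sup>2)"
        unfolding fbnd_def
      proof (intro allI impI)
        fix A :: "(nat \<Rightarrow> nat) set" assume A: "finite A \<and> A \<subseteq> fock_idx"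
        have "(\<Sum>m\<in>A. (cmod (S m - (\<Sum>i\<in>F. f i m)))\<^sup>2 * fock_wt hb m * 1)
            = (\<Sum>m\<in>A. (cmod (infsum (\<lambda>i. f i m) (I - F)))\<^sup>2 * fock_wt hb m)"
          using A split by (intro sum.cong) auto
        also have "\<dots> \<le> (infsum b (I - F))\<^sup>2" using key[of "I - F" A] A by auto
        finally show "(\<Sum>m\<in>A. (cmod (S m - (\<Sum>i\<in>F. f i m)))\<^sup>2 * fock_wt hb m * 1) \<le> (infsum b (I - F))\<^sup>2" .
      qed
      have "infsum (\<lambda>m. (cmod (S m - (\<Sum>i\<in>F. f i m)))\<^sup>2 * fock_wt hb m) fock_idx \<le> (infsum b (I - F))\<^sup>2"
        using fbnd_in_fock(2)[OF hb fb2] .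
      then have "fock_norm hb (\<lambda>m. S m - (\<Sum>i\<in>F. f i m)) \<le> sqrt ((infsum b (I - F))\<^sup>2)"
        unfolding fock_norm_def by (rule real_sqrt_le_mono)
      also have "\<dots> = infsum b (I - F)"
        using infsum_nonneg[of "I - F" b] bnn by simp
      also have "\<dots> < e" proof -
        have "dist (sum b F) (infsum b I) < e / 2" using F0(3) F by blast
        then show ?thesis using bI e by (simp add: dist_real_def)
      qed
      finally show "fock_norm hb (\<lambda>m. S m - (\<Sum>i\<in>F. f i m)) < e" .
    qed
  qed
  show ?thesis unfolding fock_has_sum_def using inS inf conv by blast
qed

definition grade :: "(nat \<Rightarrow> nat) \<Rightarrow> nat" where
  "grade m = (\<Sum>k\<in>{k. m k \<noteq> 0}. k * m k)"

definition up :: "nat \<Rightarrow> (nat \<Rightarrow> nat) \<Rightarrow> (nat \<Rightarrow> nat)" where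
  "up k m = m(k := Suc (m k))"

lemma up_inj: "inj (up k)"
proof (rule injI)
  fix x y assume e: "up k x = up k y"
  have "up k x k = up k y k" using e by simp
  then have xk: "x k = y k" by (simp add: up_def)
  show "x = y"
  proof
    fix j show "x j = y j"
    proof (cases "j = k")
      case False
      have "up k x j = up k y j" using e by simp
      then show ?thesis using False by (simp add: up_def)
    qed (simp add: xk)
  qed
qed

lemma idx_upd: "m \<in> fock_idx \<Longrightarrow> k > 0 \<Longrightarrow> m(k := v) \<in> fock_idx"
proof -
  assume m: "m \<in> fock_idx" and k: "k > 0"
  have sub: "{j. (m(k := v)) j \<noteq> 0} \<subseteq> {j. m j \<noteq> 0} \<union> {k}" by auto
  have fin: "finite ({j. m j \<noteq> 0} \<union> {k})" using m unfolding fock_idx_def by simp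
  have "finite {j. (m(k := v)) j \<noteq> 0}" using finite_subset[OF sub fin] .
  moreover have "(m(k := v)) 0 = 0" using m k unfolding fock_idx_def by simp
  ultimately show ?thesis unfolding fock_idx_def by blast
qed

lemma up_idx: "m \<in> fock_idx \<Longrightarrow> k > 0 \<Longrightarrow> up k m \<in> fock_idx"
  unfolding up_def by (rule idx_upd)

lemma up_vimage_idx: "up k m \<in> fock_idx \<Longrightarrow> k > 0 \<Longrightarrow> m \<in> fock_idx"
proof -
  assume "up k m \<in> fock_idx" "k > 0"
  then have "(up k m)(k := m k) \<in> fock_idx" by (rule idx_upd)
  then show ?thesis unfolding up_def by simp
qed

lemma prod_supp_superset:
  assumes "finite S" "{k. m k \<noteq> 0} \<subseteq> S" "\<And>k. k \<in> S \<Longrightarrow> g k 0 = 1"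
  shows "(\<Prod>k\<in>{k. m k \<noteq> 0}. g k (m k)) = (\<Prod>k\<in>S. g k (m k))"
  by (rule prod.mono_neutral_left[of S "{k. m k \<noteq> 0}" "\<lambda>k. g k (m k)"]) (use assms in auto)

lemma sum_supp_superset:
  fixes m :: "nat \<Rightarrow> nat"
  assumes "finite S" "{k. m k \<noteq> 0} \<subseteq> S"
  shows "(\<Sum>k\<in>{k. m k \<noteq> 0}. k * m k) = (\<Sum>k\<in>S. k * m k)"
  by (rule sum.mono_neutral_left[of S "{k. m k \<noteq> 0}" "\<lambda>k. k * m k"]) (use assms in auto)

lemma fin_supp: "m \<in> fock_idx \<Longrightarrow> finite {k. m k \<noteq> 0}"
  unfolding fock_idx_def by auto

lemma wt_up:
  assumes m: "m \<in> fock_idx" and k: "k > 0"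
  shows "fock_wt hb (up k m) = fock_wt hb m * (hb * real k * real (Suc (m k)))"
proof -
  define S where "S = insert k {j. m j \<noteq> 0}"
  have S: "finite S" using fin_supp[OF m] S_def by auto
  let ?g = "\<lambda>j v. (hb * real j) ^ v * fact v"
  have e1: "fock_wt hb (up k m) = (\<Prod>j\<in>S. ?g j (up k m j))"
    unfolding fock_wt_def by (rule prod_supp_superset[OF S]) (auto simp: S_def up_def)
  have e2: "fock_wt hb m = (\<Prod>j\<in>S. ?g j (m j))"
    unfolding fock_wt_def by (rule prod_supp_superset[OF S]) (auto simp: S_def)
  have kS: "k \<in> S" by (simp add: S_def)
  have "(\<Prod>j\<in>S. ?g j (up k m j)) = ?g k (Suc (m k)) * (\<Prod>j\<in>S-{k}. ?g j (up k m j))"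
    using prod.remove[OF S kS, of "\<lambda>j. ?g j (up k m j)"] by (simp add: up_def)
  also have "(\<Prod>j\<in>S-{k}. ?g j (up k m j)) = (\<Prod>j\<in>S-{k}. ?g j (m j))"
    by (rule prod.cong) (auto simp: up_def)
  also have "(\<Prod>j\<in>S. ?g j (m j)) = ?g k (m k) * (\<Prod>j\<in>S-{k}. ?g j (m j))"
    using prod.remove[OF S kS, of "\<lambda>j. ?g j (m j)"] by simp
  ultimately show ?thesis using e1 e2
    by (simp add: algebra_simps)
qed

lemma grade_up:
  assumes m: "m \<in> fock_idx" and k: "k > 0"
  shows "grade (up k m) = grade m + k"
proof -
  define S where "S = insert k {j. m j \<noteq> 0}"
  have S: "finite S" using fin_supp[OF m] S_def by auto
  have e1: "grade (up k m) = (\<Sum>j\<in>S. j * up k m j)"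
    unfolding grade_def by (rule sum_supp_superset[OF S]) (auto simp: S_def up_def)
  have e2: "grade m = (\<Sum>j\<in>S. j * m j)"
    unfolding grade_def by (rule sum_supp_superset[OF S]) (auto simp: S_def)
  have kS: "k \<in> S" by (simp add: S_def)
  have "(\<Sum>j\<in>S. j * up k m j) = k * Suc (m k) + (\<Sum>j\<in>S-{k}. j * up k m j)"
    using sum.remove[OF S kS, of "\<lambda>j. j * up k m j"] by (simp add: up_def)
  also have "(\<Sum>j\<in>S-{k}. j * up k m j) = (\<Sum>j\<in>S-{k}. j * m j)"
    by (rule sum.cong) (auto simp: up_def)
  also have "(\<Sum>j\<in>S. j * m j) = k * m k + (\<Sum>j\<in>S-{k}. j * m j)"
    using sum.remove[OF S kS, of "\<lambda>j. j * m j"] by simp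
  ultimately show ?thesis using e1 e2 by simp
qed

lemma grade_ge: "m \<in> fock_idx \<Longrightarrow> k * m k \<le> grade m"
proof (cases "m k = 0")
  case False
  assume m: "m \<in> fock_idx"
  show ?thesis unfolding grade_def
    by (rule member_le_sum[of k "{k. m k \<noteq> 0}" "\<lambda>k. k * m k"]) (use False fin_supp[OF m] in auto)
qed simp


lemma raise_up: "fock_raise k f (up k m) = f m"
  unfolding fock_raise_def up_def by simp

lemma raise_not_up: "m \<notin> range (up k) \<Longrightarrow> fock_raise k f m = 0"
proof -
  assume nr: "m \<notin> range (up k)"
  have "\<not> 0 < m k"
  proof
    assume "0 < m k"
    then have "m = up k (m(k := m k - 1))" unfolding up_def by auto
    then show False using nr by blast
  qed
  then show ?thesis unfolding fock_raise_def by simp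
qed

lemma raise_bnd:
  assumes hb: "hb > 0" and k: "k > 0" and f: "fbnd hb w' f B"
    and w: "\<And>m. m \<in> fock_idx \<Longrightarrow> hb * real k * real (Suc (m k)) * w (up k m) \<le> w' m"
  shows "fbnd hb w (fock_raise k f) B"
  unfolding fbnd_def
proof (intro allI impI)
  fix A assume A: "finite A \<and> A \<subseteq> fock_idx"
  define T where "T = up k -` A"
  have T: "finite T" unfolding T_def using A by (intro finite_vimageI up_inj) auto
  have Ti: "T \<subseteq> fock_idx" unfolding T_def using A up_vimage_idx[OF _ k] by auto
  let ?F = "\<lambda>m. (cmod (fock_raise k f m))\<^sup>2 * fock_wt hb m * w m"
  have "(\<Sum>m\<in>A. ?F m) = (\<Sum>m\<in>up k ` T. ?F m)"
  proof (rule sum.mono_neutral_right)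
    show "finite A" using A by simp
    show "up k ` T \<subseteq> A" unfolding T_def by auto
    show "\<forall>i\<in>A - up k ` T. ?F i = 0"
    proof
      fix i assume i: "i \<in> A - up k ` T"
      have "i \<notin> range (up k)" using i unfolding T_def by auto
      then show "?F i = 0" by (simp add: raise_not_up)
    qed
  qed
  also have "\<dots> = (\<Sum>m\<in>T. ?F (up k m))"
    by (rule sum.reindex[OF inj_on_subset[OF up_inj], simplified])
  also have "\<dots> \<le> (\<Sum>m\<in>T. (cmod (f m))\<^sup>2 * fock_wt hb m * w' m)"
  proof (rule sum_mono)
    fix m assume m: "m \<in> T"
    have mi: "m \<in> fock_idx" using m Ti by auto
    have "?F (up k m) = (cmod (f m))\<^sup>2 * fock_wt hb m * (hb * real k * real (Suc (m k)) * w (up k m))"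
      by (simp add: raise_up wt_up[OF mi k])
    also have "\<dots> \<le> (cmod (f m))\<^sup>2 * fock_wt hb m * w' m"
      by (rule mult_left_mono[OF w[OF mi]]) (use fock_wt_nonneg[OF hb] in simp)
    finally show "?F (up k m) \<le> (cmod (f m))\<^sup>2 * fock_wt hb m * w' m" .
  qed
  also have "\<dots> \<le> B" using f T Ti unfolding fbnd_def by blast
  finally show "(\<Sum>m\<in>A. ?F m) \<le> B" .
qed

lemma lower_up: "fock_lower hb k f m = complex_of_real (hb * real k * real (Suc (m k))) * f (up k m)"
  unfolding fock_lower_def up_def by simp

lemma lower_bnd:
  assumes hb: "hb > 0" and k: "k > 0" and f: "fbnd hb w' f B"
    and w: "\<And>m. m \<in> fock_idx \<Longrightarrow> hb * real k * real (Suc (m k)) * w m \<le> w' (up k m)"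
  shows "fbnd hb w (fock_lower hb k f) B"
  unfolding fbnd_def
proof (intro allI impI)
  fix A assume A: "finite A \<and> A \<subseteq> fock_idx"
  let ?F = "\<lambda>m. (cmod (fock_lower hb k f m))\<^sup>2 * fock_wt hb m * w m"
  let ?G = "\<lambda>m. (cmod (f m))\<^sup>2 * fock_wt hb m * w' m"
  have "(\<Sum>m\<in>A. ?F m) \<le> (\<Sum>m\<in>A. ?G (up k m))"
  proof (rule sum_mono)
    fix m assume m: "m \<in> A"
    have mi: "m \<in> fock_idx" using m A by auto
    have c: "hb * real k * real (Suc (m k)) \<ge> 0" using hb by simp
    have "?F m = (cmod (f (up k m)))\<^sup>2 * (fock_wt hb m * (hb * real k * real (Suc (m k)))) * (hb * real k * real (Suc (m k)) * w m)"
    proof -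
      have "cmod (fock_lower hb k f m) = hb * real k * real (Suc (m k)) * cmod (f (up k m))"
        unfolding lower_up norm_mult norm_of_real using c by simp
      then show ?thesis by (simp only: power2_eq_square) (simp add: algebra_simps)
    qed
    also have "\<dots> = (cmod (f (up k m)))\<^sup>2 * fock_wt hb (up k m) * (hb * real k * real (Suc (m k)) * w m)"
      by (simp add: wt_up[OF mi k])
    also have "\<dots> \<le> ?G (up k m)"
      by (rule mult_left_mono[OF w[OF mi]]) (use fock_wt_nonneg[OF hb] in simp)
    finally show "?F m \<le> ?G (up k m)" .
  qed
  also have "\<dots> = (\<Sum>m\<in>up k ` A. ?G m)"
    by (rule sum.reindex[OF inj_on_subset[OF up_inj], simplified, symmetric])
  also have "\<dots> \<le> B" using f A up_idx[OF _ k] unfolding fbnd_def by (meson finite_imageI image_subsetI subsetD)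
  finally show "(\<Sum>m\<in>A. ?F m) \<le> B" .
qed

lemma scal_bnd:
  assumes hb: "hb > 0" and f: "fbnd hb w' f B"
    and w: "\<And>m. m \<in> fock_idx \<Longrightarrow> (cmod c)\<^sup>2 * w m \<le> w' m"
  shows "fbnd hb w (\<lambda>m. c * f m) B"
  unfolding fbnd_def
proof (intro allI impI)
  fix A assume A: "finite A \<and> A \<subseteq> fock_idx"
  have "(\<Sum>m\<in>A. (cmod (c * f m))\<^sup>2 * fock_wt hb m * w m) \<le> (\<Sum>m\<in>A. (cmod (f m))\<^sup>2 * fock_wt hb m * w' m)"
  proof (rule sum_mono)
    fix m assume m: "m \<in> A"
    have "(cmod (c * f m))\<^sup>2 * fock_wt hb m * w m = (cmod (f m))\<^sup>2 * fock_wt hb m * ((cmod c)\<^sup>2 * w m)"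
      by (simp add: norm_mult power_mult_distrib)
    also have "\<dots> \<le> (cmod (f m))\<^sup>2 * fock_wt hb m * w' m"
      by (rule mult_left_mono[OF w]) (use m A fock_wt_nonneg[OF hb] in auto)
    finally show "(cmod (c * f m))\<^sup>2 * fock_wt hb m * w m \<le> (cmod (f m))\<^sup>2 * fock_wt hb m * w' m" .
  qed
  also have "\<dots> \<le> B" using f A unfolding fbnd_def by blast
  finally show "(\<Sum>m\<in>A. (cmod (c * f m))\<^sup>2 * fock_wt hb m * w m) \<le> B" .
qed

lemma fbnd_weaken:
  assumes hb: "hb > 0" and f: "fbnd hb w f B" and C: "C \<ge> 0"
    and w: "\<And>m. m \<in> fock_idx \<Longrightarrow> f m \<noteq> 0 \<Longrightarrow> w2 m \<le> C * w m"
  shows "fbnd hb w2 f (C * B)"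
  unfolding fbnd_def
proof (intro allI impI)
  fix A assume A: "finite A \<and> A \<subseteq> fock_idx"
  have "(\<Sum>m\<in>A. (cmod (f m))\<^sup>2 * fock_wt hb m * w2 m) \<le> (\<Sum>m\<in>A. C * ((cmod (f m))\<^sup>2 * fock_wt hb m * w m))"
  proof (rule sum_mono)
    fix m assume m: "m \<in> A"
    show "(cmod (f m))\<^sup>2 * fock_wt hb m * w2 m \<le> C * ((cmod (f m))\<^sup>2 * fock_wt hb m * w m)"
    proof (cases "f m = 0")
      case False
      have "(cmod (f m))\<^sup>2 * fock_wt hb m * w2 m \<le> (cmod (f m))\<^sup>2 * fock_wt hb m * (C * w m)"
        by (rule mult_left_mono[OF w]) (use m A False fock_wt_nonneg[OF hb] in auto)
      then show ?thesis by (simp add: algebra_simps)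
    qed simp
  qed
  also have "\<dots> = C * (\<Sum>m\<in>A. (cmod (f m))\<^sup>2 * fock_wt hb m * w m)" by (simp add: sum_distrib_left)
  also have "\<dots> \<le> C * B" using f A C unfolding fbnd_def by (simp add: mult_left_mono)
  finally show "(\<Sum>m\<in>A. (cmod (f m))\<^sup>2 * fock_wt hb m * w2 m) \<le> C * B" .
qed


definition supp_ge :: "nat \<Rightarrow> fock \<Rightarrow> bool" where
  "supp_ge s f \<longleftrightarrow> (\<forall>m\<in>fock_idx. f m \<noteq> 0 \<longrightarrow> s \<le> grade m)"

lemma supp_raise: "supp_ge s f \<Longrightarrow> k > 0 \<Longrightarrow> supp_ge (s + k) (fock_raise k f)"
  unfolding supp_ge_def
proof (intro ballI impI)
  fix m assume f: "\<forall>m\<in>fock_idx. f m \<noteq> 0 \<longrightarrow> s \<le> grade m" and k: "k > 0"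
    and m: "m \<in> fock_idx" and nz: "fock_raise k f m \<noteq> 0"
  have "m \<in> range (up k)" using nz raise_not_up by blast
  then obtain m' where m': "m = up k m'" by blast
  have mi: "m' \<in> fock_idx" using up_vimage_idx[OF _ k] m m' by blast
  have "f m' \<noteq> 0" using nz m' by (simp add: raise_up)
  then have "s \<le> grade m'" using f mi by blast
  then show "s + k \<le> grade m" using m' grade_up[OF mi k] by simp
qed

lemma supp_lower: "supp_ge s f \<Longrightarrow> k > 0 \<Longrightarrow> supp_ge (s - k) (fock_lower hb k f)"
  unfolding supp_ge_def
proof (intro ballI impI)
  fix m assume f: "\<forall>m\<in>fock_idx. f m \<noteq> 0 \<longrightarrow> s \<le> grade m" and k: "k > 0"
    and m: "m \<in> fock_idx" and nz: "fock_lower hb k f m \<noteq> 0"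
  have "f (up k m) \<noteq> 0" using nz by (auto simp: lower_up)
  then have "s \<le> grade (up k m)" using f up_idx[OF m k] by blast
  then show "s - k \<le> grade m" using grade_up[OF m k] by simp
qed

lemma supp_scal: "supp_ge s f \<Longrightarrow> supp_ge s (\<lambda>m. c * f m)"
  unfolding supp_ge_def by auto

lemma supp_mono: "supp_ge s f \<Longrightarrow> t \<le> s \<Longrightarrow> supp_ge t f"
  unfolding supp_ge_def by force

lemma L_out_cases:
  "L_out e1 e2 a b c = (if a = b then (\<lambda>m. complex_of_real ((e1 + e2) * real a) * c m)
     else if a < b then fock_raise (b - a) c else fock_lower (- e1 * e2) (a - b) c)"
proof (cases "a = b")
  case True then show ?thesis unfolding L_out_def Vbar_out_def by simp
next
  case False
  show ?thesis
  proof (cases "a < b")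
    case True
    have "nat (int b - int a) = b - a" using True by simp
    then show ?thesis using True unfolding L_out_def Vbar_out_def by simp
  next
    case False2: False
    then have "a > b" using False by simp
    then have "nat (- (int b - int a)) = a - b" "\<not> 0 < int b - int a" "int b - int a < 0" by simp_all
    then show ?thesis using False False2 unfolding L_out_def Vbar_out_def by simp
  qed
qed

lemma chain_supp:
  assumes "xs \<noteq> []"
  shows "supp_ge (Max (set xs) - hd xs) (lax_chain e1 e2 xs c)"
  using assms
proof (induction xs)
  case (Cons a rest)
  show ?case
  proof (cases rest)
    case Nil
    then show ?thesis by (simp add: supp_ge_def)
  next
    case (Cons b rest')
    let ?g = "lax_chain e1 e2 (b # rest') c"
    let ?M = "Max (set (b # rest'))"
    have IH: "supp_ge (?M - b) ?g" using Cons.IH Cons by simp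
    have Mb: "b \<le> ?M" by simp
    have Mnew: "Max (set (a # b # rest')) = max a ?M" by (simp add: max_def)
    have eq: "lax_chain e1 e2 (a # rest) c = L_out e1 e2 a b ?g" using Cons by simp
    show ?thesis
    proof (cases "a = b")
      case True
      then show ?thesis unfolding eq L_out_cases using IH Cons Mb Mnew
        by (auto intro: supp_scal simp: max_def)
    next
      case ne: False
      show ?thesis
      proof (cases "a < b")
        case True
        have "supp_ge (?M - b + (b - a)) (fock_raise (b - a) ?g)"
          by (rule supp_raise[OF IH]) (use True in simp)
        moreover have "?M - b + (b - a) = Max (set (a # rest)) - hd (a # rest)"
        proof -
          have "a \<le> ?M" using True Mb by linarith
          then show ?thesis using True Mb Mnew Cons by (simp add: max_def)
        qed
        ultimately show ?thesis unfolding eq L_out_cases using ne True by simp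
      next
        case False
        have "supp_ge (?M - b - (a - b)) (fock_lower (- e1 * e2) (a - b) ?g)"
          by (rule supp_lower[OF IH]) (use False ne in simp)
        moreover have "Max (set (a # rest)) - hd (a # rest) \<le> ?M - b - (a - b)"
          using False ne Mb Mnew Cons by (simp add: max_def)
        ultimately show ?thesis unfolding eq L_out_cases using ne False by (simp add: supp_mono)
      qed
    qed
  qed
qed simp


definition omega :: "real \<Rightarrow> real \<Rightarrow> nat \<Rightarrow> nat \<Rightarrow> real" where
  "omega q K j N = q ^ N / (K * (real N + 1)\<^sup>2) ^ j"

lemma omega_nonneg: "K > 0 \<Longrightarrow> q \<ge> 0 \<Longrightarrow> omega q K j N \<ge> 0"
  unfolding omega_def by simp

lemma omega_step:
  assumes K: "K > 0" and q: "q \<ge> 0" and x: "0 \<le> x" "x \<le> K * (real N + 1)\<^sup>2"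
  shows "x * omega q K (Suc j) N \<le> omega q K j N"
proof -
  have D: "K * (real N + 1)\<^sup>2 > 0" using K by simp
  have "x * omega q K (Suc j) N = (x / (K * (real N + 1)\<^sup>2)) * omega q K j N"
    unfolding omega_def by (simp add: field_simps)
  also have "\<dots> \<le> 1 * omega q K j N"
    by (rule mult_right_mono) (use x D omega_nonneg[OF K q] in \<open>auto simp: divide_le_eq\<close>)
  finally show ?thesis by simp
qed

lemma Kbound1:
  assumes "hb > 0" "K = hb + s + 1" "s \<ge> 0" "(x::real) \<le> real N"
  shows "hb * x \<le> K * (real N + 1)\<^sup>2"
proof -
  have "real N \<le> (real N + 1)\<^sup>2" by (simp add: power2_eq_square algebra_simps)
  then have "x \<le> (real N + 1)\<^sup>2" using assms(4) by linarith
  then have "hb * x \<le> hb * (real N + 1)\<^sup>2" using assms(1) by simp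
  also have "\<dots> \<le> K * (real N + 1)\<^sup>2" using assms by (intro mult_right_mono) auto
  finally show ?thesis .
qed

lemma Kbound2:
  assumes "hb > 0" "K = hb + s + 1" "s \<ge> 0" "a \<le> N"
  shows "s * (real a)\<^sup>2 \<le> K * (real N + 1)\<^sup>2"
proof -
  have "(real a)\<^sup>2 \<le> (real N + 1)\<^sup>2" using assms(4) by (intro power_mono) auto
  then have "s * (real a)\<^sup>2 \<le> s * (real N + 1)\<^sup>2" using assms(3) by (rule mult_left_mono)
  also have "\<dots> \<le> K * (real N + 1)\<^sup>2" using assms by (intro mult_right_mono) auto
  finally show ?thesis .
qed

lemma chain_bnd:
  fixes e1 e2 :: real
  assumes hb: "- e1 * e2 > 0" and Kdef: "K = - e1 * e2 + (e1 + e2)\<^sup>2 + 1" and q: "q \<ge> 0"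
  shows "xs \<noteq> [] \<Longrightarrow> fbnd (- e1 * e2) (\<lambda>m. omega q K 0 (grade m + last xs)) c B \<Longrightarrow>
    fbnd (- e1 * e2) (\<lambda>m. omega q K (length xs - 1) (grade m + hd xs)) (lax_chain e1 e2 xs c) B"
proof (induction xs)
  case (Cons a rest)
  have K: "K > 0" using Kdef hb zero_le_power2[of "e1 + e2"] by linarith
  show ?case
  proof (cases rest)
    case Nil
    then show ?thesis using Cons by simp
  next
    case (Cons b rest')
    let ?hb = "- e1 * e2"
    let ?g = "lax_chain e1 e2 (b # rest') c"
    define j where "j = length rest'"
    have IH: "fbnd ?hb (\<lambda>m. omega q K j (grade m + b)) ?g B"
      using Cons.IH Cons.prems Cons unfolding j_def by simp
    have eq: "lax_chain e1 e2 (a # rest) c = L_out e1 e2 a b ?g" using Cons by simp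
    have len: "length (a # rest) - 1 = Suc j" using Cons j_def by simp
    show ?thesis
    proof (cases "a = b")
      case True
      have "fbnd ?hb (\<lambda>m. omega q K (Suc j) (grade m + a))
             (\<lambda>m. complex_of_real ((e1 + e2) * real a) * ?g m) B"
      proof (rule scal_bnd[OF hb IH])
        fix m :: "nat \<Rightarrow> nat"
        have "(cmod (complex_of_real ((e1 + e2) * real a)))\<^sup>2 = (e1 + e2)\<^sup>2 * (real a)\<^sup>2"
          unfolding norm_of_real by (simp add: power_mult_distrib)
        moreover have "(e1 + e2)\<^sup>2 * (real a)\<^sup>2 \<le> K * (real (grade m + a) + 1)\<^sup>2"
          by (rule Kbound2[OF hb Kdef]) auto
        ultimately show "(cmod (complex_of_real ((e1 + e2) * real a)))\<^sup>2 * omega q K (Suc j) (grade m + a)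
                 \<le> omega q K j (grade m + b)"
          using omega_step[OF K q, of "(e1 + e2)\<^sup>2 * (real a)\<^sup>2" "grade m + a" j] True by simp
      qed
      then show ?thesis unfolding eq L_out_cases len using True by simp
    next
      case ne: False
      show ?thesis
      proof (cases "a < b")
        case True
        define k where "k = b - a"
        have k: "k > 0" using True k_def by simp
        have "fbnd ?hb (\<lambda>m. omega q K (Suc j) (grade m + a)) (fock_raise k ?g) B"
        proof (rule raise_bnd[OF hb k IH])
          fix m :: "nat \<Rightarrow> nat" assume m: "m \<in> fock_idx"
          have gu: "grade (up k m) + a = grade m + b" using grade_up[OF m k] k_def True by simp
          have "real (k * m k) \<le> real (grade m)" using grade_ge[OF m, of k] of_nat_le_iff by blast
          moreover have "real k * real (Suc (m k)) = real (k * m k) + real k" by (simp add: algebra_simps)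
          moreover have "real k \<le> real b" using k_def by simp
          ultimately have x: "real k * real (Suc (m k)) \<le> real (grade m + b)" by simp
          have "?hb * (real k * real (Suc (m k))) \<le> K * (real (grade m + b) + 1)\<^sup>2"
            by (rule Kbound1[OF hb Kdef _ x]) simp
          then have bd: "?hb * real k * real (Suc (m k)) \<le> K * (real (grade m + b) + 1)\<^sup>2"
            by (simp add: mult.assoc)
          have x0: "0 \<le> ?hb * real k * real (Suc (m k))" by (rule mult_nonneg_nonneg[OF mult_nonneg_nonneg]) (use hb in simp_all)
          have "?hb * real k * real (Suc (m k)) * omega q K (Suc j) (grade m + b) \<le> omega q K j (grade m + b)"
            using omega_step[OF K q x0 bd] .
          then show "?hb * real k * real (Suc (m k)) * omega q K (Suc j) (grade (up k m) + a) \<le> omega q K j (grade m + b)"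
            using gu by simp
        qed
        then show ?thesis unfolding eq L_out_cases len using ne True k_def by simp
      next
        case False
        define k where "k = a - b"
        have k: "k > 0" using False ne k_def by simp
        have "fbnd ?hb (\<lambda>m. omega q K (Suc j) (grade m + a)) (fock_lower ?hb k ?g) B"
        proof (rule lower_bnd[OF hb k IH])
          fix m :: "nat \<Rightarrow> nat" assume m: "m \<in> fock_idx"
          have gu: "grade (up k m) + b = grade m + a" using grade_up[OF m k] k_def False ne by simp
          have "real (k * m k) \<le> real (grade m)" using grade_ge[OF m, of k] of_nat_le_iff by blast
          moreover have "real k * real (Suc (m k)) = real (k * m k) + real k" by (simp add: algebra_simps)
          moreover have "real k \<le> real a" using k_def by simp
          ultimately have x: "real k * real (Suc (m k)) \<le> real (grade m + a)" by simp
          have "?hb * (real k * real (Suc (m k))) \<le> K * (real (grade m + a) + 1)\<^sup>2"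
            by (rule Kbound1[OF hb Kdef _ x]) simp
          then have bd: "?hb * real k * real (Suc (m k)) \<le> K * (real (grade m + a) + 1)\<^sup>2"
            by (simp add: mult.assoc)
          have x0: "0 \<le> ?hb * real k * real (Suc (m k))" by (rule mult_nonneg_nonneg[OF mult_nonneg_nonneg]) (use hb in simp_all)
          have "?hb * real k * real (Suc (m k)) * omega q K (Suc j) (grade m + a) \<le> omega q K j (grade m + a)"
            using omega_step[OF K q x0 bd] .
          then show "?hb * real k * real (Suc (m k)) * omega q K (Suc j) (grade m + a) \<le> omega q K j (grade (up k m) + b)"
            using gu by simp
        qed
        then show ?thesis unfolding eq L_out_cases len using ne False k_def by simp
      qed
    qed
  qed
qed simp

lemma lim_bounded:
  fixes X :: "nat \<Rightarrow> real"
  assumes "X \<longlonglongrightarrow> L"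
  shows "\<exists>D. \<forall>n. X n \<le> D"
proof -
  have "Bseq X" using assms convergent_imp_Bseq convergentI by blast
  then obtain K where "\<forall>n. norm (X n) \<le> K" by (auto elim: BseqE)
  then show ?thesis by (metis abs_le_D1 real_norm_def)
qed

lemma poly_geom_bound:
  fixes x :: real
  assumes x: "0 \<le> x" "x < 1"
  shows "\<exists>D. \<forall>n. real (n + 1) ^ p * x ^ n \<le> D"
proof (cases "p = 0")
  case True
  then show ?thesis using x by (intro exI[of _ 1]) (auto intro: power_le_one)
next
  case False
  then have p: "p > 0" by simp
  define c where "c = root p x"
  have c: "0 \<le> c" "c < 1" using x p unfolding c_def by auto
  have cp: "c ^ p = x" using x p unfolding c_def by simp
  have "(\<lambda>n. of_nat n * c ^ n) \<longlonglongrightarrow> (0::real)"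
    by (rule powser_times_n_limit_0) (use c in simp)
  then obtain D1 where D1: "\<And>n. real n * c ^ n \<le> D1" using lim_bounded by blast
  have b: "real (n + 1) * c ^ n \<le> D1 + 1" for n
  proof -
    have "c ^ n \<le> 1" using c by (intro power_le_one) auto
    then show ?thesis using D1[of n] by (simp add: algebra_simps)
  qed
  show ?thesis
  proof (intro exI allI)
    fix n
    have "real (n + 1) ^ p * x ^ n = (real (n + 1) * c ^ n) ^ p"
      by (simp add: power_mult_distrib cp[symmetric] power_mult[symmetric] mult.commute)
    also have "\<dots> \<le> (D1 + 1) ^ p"
      by (rule power_mono[OF b]) (use c in simp)
    finally show "real (n + 1) ^ p * x ^ n \<le> (D1 + 1) ^ p" .
  qed
qed

lemma geom_finite_sum:
  fixes x :: real
  assumes x: "0 \<le> x" "x < 1" and H: "finite H"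
  shows "(\<Sum>h\<in>H. x ^ h) \<le> 1 / (1 - x)"
proof -
  have "(\<Sum>h\<in>H. x ^ h) \<le> (\<Sum>n. x ^ n)"
    by (rule sum_le_suminf[OF summable_geometric H]) (use x in auto)
  also have "\<dots> = 1 / (1 - x)" by (rule suminf_geometric) (use x in simp)
  finally show ?thesis .
qed

lemma exp_finite_sum:
  fixes a :: real
  assumes a: "0 \<le> a" and J: "finite J"
  shows "(\<Sum>j\<in>J. a ^ j / fact j) \<le> exp a"
proof -
  have s: "(\<lambda>n. a ^ n / fact n) sums exp a"
    using exp_converges[of a] by (simp add: divide_inverse mult.commute)
  have "(\<Sum>j\<in>J. a ^ j / fact j) \<le> (\<Sum>n. a ^ n / fact n)"
    by (rule sum_le_suminf[OF sums_summable[OF s] J]) (use a in auto)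
  also have "\<dots> = exp a" using s by (simp add: sums_iff)
  finally show ?thesis .
qed


lemma multi_sum_bound:
  fixes g :: "nat \<Rightarrow> nat \<Rightarrow> real" and E :: "nat \<Rightarrow> real"
  assumes Ks: "finite Ks" and g0: "\<And>k j. g k j \<ge> 0" and g1: "\<And>k. g k 0 = 1"
    and E: "\<And>k J. finite J \<Longrightarrow> sum (g k) J \<le> E k"
  shows "finite A \<Longrightarrow> (\<forall>m\<in>A. {k. m k \<noteq> 0} \<subseteq> Ks) \<Longrightarrow>
         (\<Sum>m\<in>A. \<Prod>k\<in>Ks. g k (m k)) \<le> (\<Prod>k\<in>Ks. E k)"
  using Ks
proof (induction Ks arbitrary: A rule: finite_induct)
  case empty
  then have "A \<subseteq> {\<lambda>_. 0}" by auto
  then have "card A \<le> card {\<lambda>_::nat. 0::nat}" by (intro card_mono) auto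
  then show ?case by simp
next
  case (insert K Ks)
  have E0: "E k \<ge> 0" for k using E[of "{0}" k] g1[of k] by simp
  let ?P = "\<lambda>m. \<Prod>k\<in>Ks. g k (m k)"
  have "(\<Sum>m\<in>A. \<Prod>k\<in>insert K Ks. g k (m k)) = (\<Sum>m\<in>A. g K (m K) * ?P m)"
    using insert by simp
  also have "\<dots> = (\<Sum>j\<in>(\<lambda>m. m K) ` A. \<Sum>m\<in>{m\<in>A. m K = j}. g K (m K) * ?P m)"
    by (rule sum.image_gen) (use insert in simp)
  also have "\<dots> \<le> (\<Sum>j\<in>(\<lambda>m. m K) ` A. g K j * (\<Prod>k\<in>Ks. E k))"
  proof (rule sum_mono)
    fix j assume "j \<in> (\<lambda>m. m K) ` A"
    let ?Aj = "{m\<in>A. m K = j}"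
    have "(\<Sum>m\<in>?Aj. g K (m K) * ?P m) = g K j * (\<Sum>m\<in>?Aj. ?P (m(K := 0)))"
    proof -
      have "?P (m(K := 0)) = ?P m" for m
        by (rule prod.cong) (use insert.hyps(2) in auto)
      then show ?thesis by (simp add: sum_distrib_left)
    qed
    also have "(\<Sum>m\<in>?Aj. ?P (m(K := 0))) = (\<Sum>m\<in>(\<lambda>m. m(K := 0)) ` ?Aj. ?P m)"
    proof (rule sum.reindex[symmetric, unfolded comp_def])
      show "inj_on (\<lambda>m. m(K := 0)) ?Aj"
      proof (rule inj_onI)
        fix x y assume x: "x \<in> ?Aj" and y: "y \<in> ?Aj" and e: "x(K := 0) = y(K := 0)"
        show "x = y"
        proof
          fix i show "x i = y i"
          proof (cases "i = K")
            case True then show ?thesis using x y by simp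
          next
            case False then show ?thesis using fun_cong[OF e, of i] by simp
          qed
        qed
      qed
    qed
    also have "\<dots> \<le> (\<Prod>k\<in>Ks. E k)"
    proof (rule insert.IH)
      show "finite ((\<lambda>m. m(K := 0)) ` ?Aj)" using insert by simp
      show "\<forall>m\<in>(\<lambda>m. m(K := 0)) ` ?Aj. {k. m k \<noteq> 0} \<subseteq> Ks"
      proof
        fix m' assume "m' \<in> (\<lambda>m. m(K := 0)) ` ?Aj"
        then obtain m where m: "m \<in> A" "m' = m(K := 0)" by blast
        have "{k. m k \<noteq> 0} \<subseteq> insert K Ks" using insert.prems(2) m(1) by blast
        then show "{k. m' k \<noteq> 0} \<subseteq> Ks" using m(2) by auto
      qed
    qed
    finally show "(\<Sum>m\<in>?Aj. g K (m K) * ?P m) \<le> g K j * (\<Prod>k\<in>Ks. E k)"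
      by (simp add: g0 mult_left_mono)
  qed
  also have "\<dots> = (\<Sum>j\<in>(\<lambda>m. m K) ` A. g K j) * (\<Prod>k\<in>Ks. E k)"
    by (simp add: sum_distrib_right)
  also have "\<dots> \<le> E K * (\<Prod>k\<in>Ks. E k)"
    by (rule mult_right_mono[OF E]) (use insert.prems(1) E0 in \<open>simp_all add: prod_nonneg\<close>)
  also have "\<dots> = (\<Prod>k\<in>insert K Ks. E k)" using insert by simp
  finally show ?case .
qed


lemma alg_pt:
  fixes x u q f :: real
  assumes "f > 0"
  shows "(x ^ j / f)\<^sup>2 * (u ^ j * f) * q ^ (k * j) = (x\<^sup>2 * u * q ^ k) ^ j / f"
proof -
  have "q ^ (k * j) = (q ^ k) ^ j" by (simp add: power_mult)
  moreover have "(x ^ j)\<^sup>2 = (x\<^sup>2) ^ j" by (simp add: power_mult[symmetric] mult.commute)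
  ultimately have "(x ^ j / f)\<^sup>2 * (u ^ j * f) * q ^ (k * j) = ((x\<^sup>2) ^ j * u ^ j * (q ^ k) ^ j) * (f / f\<^sup>2)"
    by (simp add: power_divide algebra_simps)
  also have "f / f\<^sup>2 = 1 / f" using assms by (simp add: power2_eq_square)
  also have "(x\<^sup>2) ^ j * u ^ j * (q ^ k) ^ j = (x\<^sup>2 * u * q ^ k) ^ j" by (simp add: power_mult_distrib)
  finally show ?thesis by simp
qed

lemma sc_pointwise:
  assumes hb: "hb > 0" and m: "m \<in> fock_idx"
  shows "(cmod (stanley_cauchy hb vin m))\<^sup>2 * fock_wt hb m * q ^ grade m
       = (\<Prod>k\<in>{k. m k \<noteq> 0}. ((cmod (vin k / complex_of_real (hb * real k)))\<^sup>2 * (hb * real k) * q ^ k) ^ (m k) / fact (m k))"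
proof -
  let ?S = "{k. m k \<noteq> 0}"
  let ?x = "\<lambda>k. cmod (vin k / complex_of_real (hb * real k))"
  have n: "cmod (stanley_cauchy hb vin m) = (\<Prod>k\<in>?S. ?x k ^ m k / fact (m k))"
    unfolding stanley_cauchy_def prod_norm[symmetric]
    by (rule prod.cong) (simp_all add: norm_divide norm_power)
  have g: "q ^ grade m = (\<Prod>k\<in>?S. q ^ (k * m k))"
    unfolding grade_def by (rule power_sum)
  have "(cmod (stanley_cauchy hb vin m))\<^sup>2 * fock_wt hb m * q ^ grade m
      = (\<Prod>k\<in>?S. (?x k ^ m k / fact (m k))\<^sup>2) * (\<Prod>k\<in>?S. (hb * real k) ^ m k * fact (m k)) * (\<Prod>k\<in>?S. q ^ (k * m k))"
    unfolding n g fock_wt_def prod_power_distrib ..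
  also have "\<dots> = (\<Prod>k\<in>?S. (?x k ^ m k / fact (m k))\<^sup>2 * ((hb * real k) ^ m k * fact (m k)) * q ^ (k * m k))"
    by (simp add: prod.distrib)
  also have "\<dots> = (\<Prod>k\<in>?S. ((?x k)\<^sup>2 * (hb * real k) * q ^ k) ^ (m k) / fact (m k))"
    by (rule prod.cong) (simp_all add: alg_pt)
  finally show ?thesis .
qed


lemma a_bound:
  fixes \<rho> hb Cv :: real and v :: complex and k :: nat
  assumes hb: "hb > 0" and r: "0 < \<rho>" and k: "k > 0" and Cv: "Cv \<ge> 0"
    and v: "cmod v \<le> Cv * real k * \<rho> ^ k"
  shows "(cmod (v / complex_of_real (hb * real k)))\<^sup>2 * (hb * real k) * (1 / \<rho>) ^ k \<le> Cv\<^sup>2 / hb * (real k * \<rho> ^ k)"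
proof -
  have u: "hb * real k > 0" using hb k by simp
  have e: "(cmod (v / complex_of_real (hb * real k)))\<^sup>2 * (hb * real k) * (1 / \<rho>) ^ k
      = (cmod v)\<^sup>2 * ((1 / \<rho>) ^ k / (hb * real k))"
  proof -
    have "cmod (v / complex_of_real (hb * real k)) = cmod v / (hb * real k)"
      unfolding norm_divide norm_of_real using u by simp
    then show ?thesis using u by (simp add: power2_eq_square field_simps)
  qed
  have "(cmod v)\<^sup>2 \<le> (Cv * real k * \<rho> ^ k)\<^sup>2" by (rule power_mono[OF v]) simp
  then have "(cmod v)\<^sup>2 * ((1 / \<rho>) ^ k / (hb * real k)) \<le> (Cv * real k * \<rho> ^ k)\<^sup>2 * ((1 / \<rho>) ^ k / (hb * real k))"
    by (rule mult_right_mono) (use u r in simp)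
  also have "\<dots> = Cv\<^sup>2 / hb * (real k * \<rho> ^ k) * (\<rho> ^ k * (1 / \<rho>) ^ k)"
    using u by (simp add: power2_eq_square field_simps)
  also have "\<rho> ^ k * (1 / \<rho>) ^ k = 1" using r by (simp add: power_one_over)
  finally show ?thesis using e by simp
qed

lemma sc_bound:
  fixes \<rho> hb Cv :: real
  assumes hb: "hb > 0" and r: "0 < \<rho>" "\<rho> < 1" and Cv: "Cv \<ge> 0"
    and vb: "\<And>k. k > 0 \<Longrightarrow> cmod (vin k) \<le> Cv * real k * \<rho> ^ k"
  shows "\<exists>B. fbnd hb (\<lambda>m. (1 / \<rho>) ^ grade m) (stanley_cauchy hb vin) B"
proof -
  define a where "a k = (cmod (vin k / complex_of_real (hb * real k)))\<^sup>2 * (hb * real k) * (1 / \<rho>) ^ k" for k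
  have a0: "a k \<ge> 0" for k unfolding a_def using hb r by simp
  define s where "s = sqrt \<rho>"
  have s: "0 \<le> s" "s < 1" using r unfolding s_def by auto
  obtain D where D: "\<And>n. real (n + 1) ^ 1 * s ^ n \<le> D" using poly_geom_bound[OF s, of 1] by blast
  have D0: "D \<ge> 0" using D[of 0] by simp
  have ak: "a k \<le> Cv\<^sup>2 / hb * D * s ^ k" for k
  proof (cases "k = 0")
    case True then show ?thesis using D0 hb unfolding a_def by simp
  next
    case False
    then have "a k \<le> Cv\<^sup>2 / hb * (real k * \<rho> ^ k)" unfolding a_def
      using a_bound[OF hb r(1) _ Cv vb] by simp
    also have "real k * \<rho> ^ k \<le> D * s ^ k"
    proof -
      have "\<rho> ^ k = s ^ k * s ^ k" using r unfolding s_def by (simp add: power_mult_distrib[symmetric])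
      then have "real k * \<rho> ^ k = (real k * s ^ k) * s ^ k" by simp
      also have "\<dots> \<le> D * s ^ k"
      proof (rule mult_right_mono)
        have "real k * s ^ k \<le> (1 + real k) * s ^ k" by (rule mult_right_mono) (use s in auto)
        then show "real k * s ^ k \<le> D" using D[of k] by simp
      qed (use s in simp)
      finally show ?thesis .
    qed
    then have "Cv\<^sup>2 / hb * (real k * \<rho> ^ k) \<le> Cv\<^sup>2 / hb * (D * s ^ k)"
      by (rule mult_left_mono) (use hb in simp)
    finally show ?thesis by simp
  qed
  define Atot where "Atot = Cv\<^sup>2 / hb * D * (1 / (1 - s))"
  have Ks_bound: "sum a Ks \<le> Atot" if "finite Ks" for Ks
  proof -
    have "sum a Ks \<le> (\<Sum>k\<in>Ks. Cv\<^sup>2 / hb * D * s ^ k)" by (rule sum_mono[OF ak])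
    also have "\<dots> = Cv\<^sup>2 / hb * D * (\<Sum>k\<in>Ks. s ^ k)" by (simp add: sum_distrib_left)
    also have "\<dots> \<le> Atot" unfolding Atot_def
      by (rule mult_left_mono[OF geom_finite_sum[OF s that]]) (use hb D0 in simp)
    finally show ?thesis .
  qed
  show ?thesis
  proof (intro exI[of _ "exp Atot"], unfold fbnd_def, intro allI impI)
    fix A assume A: "finite A \<and> A \<subseteq> fock_idx"
    define Ks where "Ks = (\<Union>m\<in>A. {k. m k \<noteq> 0})"
    have Ks: "finite Ks" unfolding Ks_def using A fin_supp by auto
    let ?g = "\<lambda>k j. a k ^ j / fact j"
    have "(\<Sum>m\<in>A. (cmod (stanley_cauchy hb vin m))\<^sup>2 * fock_wt hb m * (1 / \<rho>) ^ grade m)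
        = (\<Sum>m\<in>A. \<Prod>k\<in>Ks. ?g k (m k))"
    proof (rule sum.cong[OF refl])
      fix m assume m: "m \<in> A"
      have mi: "m \<in> fock_idx" using m A by auto
      have "(cmod (stanley_cauchy hb vin m))\<^sup>2 * fock_wt hb m * (1 / \<rho>) ^ grade m
          = (\<Prod>k\<in>{k. m k \<noteq> 0}. ?g k (m k))"
        unfolding sc_pointwise[OF hb mi] a_def ..
      also have "\<dots> = (\<Prod>k\<in>Ks. ?g k (m k))"
        by (rule prod_supp_superset[OF Ks]) (use m in \<open>auto simp: Ks_def\<close>)
      finally show "(cmod (stanley_cauchy hb vin m))\<^sup>2 * fock_wt hb m * (1 / \<rho>) ^ grade m = (\<Prod>k\<in>Ks. ?g k (m k))" .
    qed
    also have "\<dots> \<le> (\<Prod>k\<in>Ks. exp (a k))"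
    proof (rule multi_sum_bound[OF Ks])
      show "\<And>k j. 0 \<le> ?g k j" using a0 by simp
      show "\<And>k. ?g k 0 = 1" by simp
      show "\<And>k J. finite J \<Longrightarrow> sum (?g k) J \<le> exp (a k)" using exp_finite_sum a0 by blast
      show "finite A" using A by simp
      show "\<forall>m\<in>A. {k. m k \<noteq> 0} \<subseteq> Ks" unfolding Ks_def by blast
    qed
    also have "\<dots> = exp (sum a Ks)" by (rule exp_sum[OF Ks, symmetric])
    also have "\<dots> \<le> exp Atot" using Ks_bound[OF Ks] by simp
    finally show "(\<Sum>m\<in>A. (cmod (stanley_cauchy hb vin m))\<^sup>2 * fock_wt hb m * (1 / \<rho>) ^ grade m) \<le> exp Atot" .
  qed
qed


lemma vin_bound:
  assumes "\<exists>U. open U \<and> sphere 0 1 \<subseteq> U \<and>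
           (\<forall>w\<in>U. summable (\<lambda>k. vout (Suc k) * inverse w ^ Suc k / of_nat (Suc k)) \<and>
                   summable (\<lambda>k. vin (Suc k) * w ^ Suc k / of_nat (Suc k))) \<and>
           potential vout vin holomorphic_on U"
  shows "\<exists>\<rho> Cv. 0 < \<rho> \<and> \<rho> < 1 \<and> Cv \<ge> 0 \<and> (\<forall>k>0. cmod (vin k) \<le> Cv * real k * \<rho> ^ k)"
proof -
  obtain U where U: "open U" "sphere 0 1 \<subseteq> U"
    and sU: "\<forall>w\<in>U. summable (\<lambda>k. vout (Suc k) * inverse w ^ Suc k / of_nat (Suc k)) \<and>
                   summable (\<lambda>k. vin (Suc k) * w ^ Suc k / of_nat (Suc k))"
    using assms by blast
  have "(1::complex) \<in> sphere 0 1" by simp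
  then have "(1::complex) \<in> U" using U(2) by (rule subsetD[rotated])
  then obtain \<delta> where d: "\<delta> > 0" "ball 1 \<delta> \<subseteq> U" using U(1) unfolding open_contains_ball by blast
  define R where "R = 1 + \<delta> / 2"
  have R: "R > 1" using d unfolding R_def by simp
  have "1 - complex_of_real R = complex_of_real (- (\<delta> / 2))" unfolding R_def by simp
  then have "dist 1 (complex_of_real R) = \<delta> / 2" unfolding dist_norm norm_of_real using d by simp
  then have "complex_of_real R \<in> ball 1 \<delta>" using d by simp
  then have "complex_of_real R \<in> U" using d(2) by (rule subsetD[rotated])
  then have sm: "summable (\<lambda>k. vin (Suc k) * complex_of_real R ^ Suc k / of_nat (Suc k))"
    using sU by blast
  have "(\<lambda>k. cmod (vin (Suc k) * complex_of_real R ^ Suc k / of_nat (Suc k))) \<longlonglongrightarrow> 0"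
    using summable_LIMSEQ_zero[OF sm] by (rule tendsto_norm_zero)
  then obtain C where C: "\<And>k. cmod (vin (Suc k) * complex_of_real R ^ Suc k / of_nat (Suc k)) \<le> C"
    using lim_bounded by blast
  show ?thesis
  proof (intro exI conjI allI impI)
    show "0 < 1 / R" "1 / R < 1" using R by auto
    show "max C 0 \<ge> 0" by simp
    fix k :: nat assume k: "0 < k"
    then obtain j where j: "k = Suc j" using gr0_implies_Suc by blast
    have "cmod (vin (Suc j) * complex_of_real R ^ Suc j / of_nat (Suc j)) = cmod (vin k) * R ^ k / real k"
      unfolding norm_mult norm_divide norm_power norm_of_real norm_of_nat j using R by simp
    then have "cmod (vin k) * R ^ k / real k \<le> C" using C[of j] by simp
    then have "cmod (vin k) * R ^ k \<le> C * real k" using k by (simp add: divide_le_eq)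
    then have "cmod (vin k) \<le> C * real k / R ^ k" using R by (simp add: le_divide_eq)
    also have "\<dots> \<le> max C 0 * real k / R ^ k"
      by (rule divide_right_mono[OF mult_right_mono]) (use R in simp_all)
    also have "\<dots> = max C 0 * real k * (1 / R) ^ k" by (simp add: power_one_over)
    finally show "cmod (vin k) \<le> max C 0 * real k * (1 / R) ^ k" .
  qed
qed

lemma list_geom_bound:
  fixes \<beta> :: real
  assumes b: "0 \<le> \<beta>" "\<beta> < 1"
  shows "finite F \<Longrightarrow> F \<subseteq> {hs. length hs = n} \<Longrightarrow> (\<Sum>hs\<in>F. \<beta> ^ sum_list hs) \<le> (1 / (1 - \<beta>)) ^ n"
proof (induction n arbitrary: F)
  case 0
  then have F: "F \<subseteq> {[]}" by auto
  have "(\<Sum>hs\<in>F. \<beta> ^ sum_list hs) \<le> (\<Sum>hs\<in>{[]}. \<beta> ^ sum_list hs)"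
    by (rule sum_mono2[OF _ F]) (use b in simp_all)
  then show ?case by simp
next
  case (Suc n)
  define H where "H = hd ` F"
  define T where "T = tl ` F"
  have HT: "finite H" "finite T" using Suc.prems unfolding H_def T_def by auto
  have Tn: "T \<subseteq> {hs. length hs = n}" using Suc.prems unfolding T_def by auto
  let ?c = "\<lambda>(h::nat, t::nat list). h # t"
  have FG: "F \<subseteq> ?c ` (H \<times> T)"
  proof
    fix x assume x: "x \<in> F"
    then have "x \<noteq> []" using Suc.prems by auto
    then have "x = ?c (hd x, tl x)" by simp
    then show "x \<in> ?c ` (H \<times> T)" using x unfolding H_def T_def by blast
  qed
  have inj: "inj_on ?c (H \<times> T)" by (rule inj_onI) auto
  have "(\<Sum>hs\<in>F. \<beta> ^ sum_list hs) \<le> (\<Sum>hs\<in>?c ` (H \<times> T). \<beta> ^ sum_list hs)"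
    by (rule sum_mono2) (use FG HT b in simp_all)
  also have "\<dots> = (\<Sum>p\<in>H \<times> T. \<beta> ^ sum_list (?c p))"
    by (rule sum.reindex[OF inj, unfolded comp_def])
  also have "\<dots> = (\<Sum>h\<in>H. \<Sum>t\<in>T. \<beta> ^ h * \<beta> ^ sum_list t)"
    unfolding sum.cartesian_product by (rule sum.cong[OF refl]) (auto simp: power_add)
  also have "\<dots> = (\<Sum>h\<in>H. \<beta> ^ h) * (\<Sum>t\<in>T. \<beta> ^ sum_list t)"
    by (rule sum_product[symmetric])
  also have "\<dots> \<le> (1 / (1 - \<beta>)) * (1 / (1 - \<beta>)) ^ n"
    by (rule mult_mono[OF geom_finite_sum[OF b HT(1)] Suc.IH[OF HT(2) Tn]])
       (use b in \<open>simp_all add: sum_nonneg\<close>)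
  finally show ?case by simp
qed

lemma sum_list_le: "(\<forall>x\<in>set hs. x \<le> H) \<Longrightarrow> sum_list hs \<le> length hs * (H::nat)"
  by (induction hs) auto

lemma fbnd_mono_B: "fbnd hb w f B \<Longrightarrow> B \<le> B' \<Longrightarrow> fbnd hb w f B'"
  unfolding fbnd_def by (meson order_trans)

lemma weight_ineq:
  fixes K D0 \<tau> :: real
  assumes K: "K > 0" and t: "0 < \<tau>" "\<tau> \<le> 1" and D0: "\<And>N. real (N + 1) ^ (2 * l) * \<tau> ^ N \<le> D0"
    and NH: "H \<le> N"
  shows "1 \<le> K ^ l * D0 * \<tau> ^ H * omega (1 / \<tau>\<^sup>2) K l N"
proof -
  have P: "(K * (real N + 1)\<^sup>2) ^ l = K ^ l * real (N + 1) ^ (2 * l)"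
    by (simp add: power_mult_distrib power_mult add.commute)
  have P0: "K ^ l * real (N + 1) ^ (2 * l) > 0" using K by simp
  have tN: "\<tau> ^ N \<le> \<tau> ^ H" using t NH by (simp add: power_decreasing)
  have "real (N + 1) ^ (2 * l) * (\<tau> ^ N * \<tau> ^ N) \<le> D0 * \<tau> ^ H"
  proof -
    have "real (N + 1) ^ (2 * l) * (\<tau> ^ N * \<tau> ^ N) = (real (N + 1) ^ (2 * l) * \<tau> ^ N) * \<tau> ^ N" by simp
    also have "\<dots> \<le> D0 * \<tau> ^ H"
      by (rule mult_mono[OF D0 tN]) (use t D0[of 0] in simp_all)
    finally show ?thesis .
  qed
  define X where "X = K ^ l * real (N + 1) ^ (2 * l) * (\<tau> ^ N * \<tau> ^ N)"
  have X0: "X > 0" unfolding X_def using P0 t by simp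
  have "X \<le> K ^ l * D0 * \<tau> ^ H"
    unfolding X_def using K \<open>real (N + 1) ^ (2 * l) * (\<tau> ^ N * \<tau> ^ N) \<le> D0 * \<tau> ^ H\<close>
    by (simp add: mult.assoc mult_left_mono)
  moreover have "omega (1 / \<tau>\<^sup>2) K l N = 1 / X"
    unfolding omega_def P X_def by (simp add: power_one_over power_mult[symmetric] power_add[symmetric] mult_2[symmetric] mult.commute)
  ultimately show ?thesis using X0 by (simp add: le_divide_eq)
qed


theorem proposition4p3:
  fixes e1 e2 :: real and vout vin :: "nat \<Rightarrow> complex"
  assumes "e2 < 0" and "0 < e1"
    and "\<exists>U. open U \<and> sphere 0 1 \<subseteq> U \<and>
           (\<forall>w\<in>U. summable (\<lambda>k. vout (Suc k) * inverse w ^ Suc k / of_nat (Suc k)) \<and>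
                   summable (\<lambda>k. vin (Suc k) * w ^ Suc k / of_nat (Suc k))) \<and>
           potential vout vin holomorphic_on U"
  shows "\<forall>l::nat. in_vac_domain e1 e2 l (stanley_cauchy (- e1 * e2) vin)"
proof
  fix l :: nat
  define hb where "hb = - e1 * e2"
  have hb: "hb > 0" unfolding hb_def using assms(1,2) by (simp add: mult_pos_neg)
  obtain \<rho> Cv where r: "0 < \<rho>" "\<rho> < 1" and Cv: "Cv \<ge> 0"
    and vb: "\<forall>k>0. cmod (vin k) \<le> Cv * real k * \<rho> ^ k"
    using vin_bound[OF assms(3)] by blast
  define Pi where "Pi = stanley_cauchy hb vin"
  obtain CP where P: "fbnd hb (\<lambda>m. (1 / \<rho>) ^ grade m) Pi CP"
    using sc_bound[OF hb r Cv] vb unfolding Pi_def by blast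
  have CP0: "CP \<ge> 0" using P[unfolded fbnd_def, rule_format, of "{}"] by simp
  have P1: "fbnd hb (\<lambda>_. 1) Pi CP"
  proof -
    have "fbnd hb (\<lambda>_. 1) Pi (1 * CP)"
      by (rule fbnd_weaken[OF hb P]) (use r in \<open>simp_all add: one_le_power\<close>)
    then show ?thesis by simp
  qed
  have inP: "in_fock hb Pi" using fbnd_in_fock(1)[OF hb P1] .
  have "\<exists>S. fock_has_sum hb (\<lambda>hs. vac_term e1 e2 l hs Pi) {hs. length hs = l - 1} S"
  proof (cases "l = 0")
    case True
    have I: "{hs :: nat list. length hs = l - 1} = {[]}" using True by auto
    show ?thesis unfolding I
    proof (rule fock_sum_exists[OF hb, where b = "\<lambda>_. sqrt CP"])
      show "(\<lambda>_. sqrt CP) summable_on {[]}" by simp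
      show "\<And>i. i \<in> {[]} \<Longrightarrow> 0 \<le> sqrt CP" using CP0 by simp
      show "\<And>i. i \<in> {[]} \<Longrightarrow> fbnd hb (\<lambda>_. 1) (vac_term e1 e2 l i Pi) ((sqrt CP)\<^sup>2)"
        using P1 CP0 True by (simp add: vac_term_def)
    qed
  next
    case False
    define n where "n = l - 1"
    define K where "K = hb + (e1 + e2)\<^sup>2 + 1"
    have K: "K > 0" unfolding K_def using hb zero_le_power2[of "e1 + e2"] by linarith
    define \<tau> where "\<tau> = sqrt \<rho>"
    have t: "0 < \<tau>" "\<tau> < 1" "\<tau> \<le> 1" using r unfolding \<tau>_def by auto
    have q: "1 / \<tau>\<^sup>2 = 1 / \<rho>" using r unfolding \<tau>_def by simp
    obtain D0 where D0: "\<And>N. real (N + 1) ^ (2 * l) * \<tau> ^ N \<le> D0"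
      using poly_geom_bound[of \<tau> "2 * l"] t by auto
    have D00: "D0 \<ge> 0" using D0[of 0] by simp
    define \<gamma> where "\<gamma> = root (2 * n) \<tau>"
    have g: "0 \<le> \<gamma>" "\<gamma> < 1" using t unfolding \<gamma>_def by (cases "n = 0"; simp)+
    define b where "b hs = sqrt (K ^ l * D0 * CP) * \<gamma> ^ sum_list hs" for hs :: "nat list"
    show ?thesis
    proof (rule fock_sum_exists[OF hb, where b = b])
      show "\<And>i. i \<in> {hs. length hs = l - 1} \<Longrightarrow> 0 \<le> b i"
        unfolding b_def using g K D00 CP0 by simp
      have "(\<lambda>hs. \<gamma> ^ sum_list hs) summable_on {hs. length hs = l - 1}"
      proof (rule nonneg_bdd_above_summable_on)
        show "\<And>x. x \<in> {hs. length hs = l - 1} \<Longrightarrow> 0 \<le> \<gamma> ^ sum_list x" using g by simp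
        show "bdd_above (sum (\<lambda>hs. \<gamma> ^ sum_list hs) ` {F. F \<subseteq> {hs. length hs = l - 1} \<and> finite F})"
          by (rule bdd_aboveI[where M = "(1 / (1 - \<gamma>)) ^ (l - 1)"]) (use list_geom_bound[OF g] in blast)
      qed
      then show "b summable_on {hs. length hs = l - 1}"
        unfolding b_def by (rule summable_on_cmult_right)
      fix hs :: "nat list" assume hs: "hs \<in> {hs. length hs = l - 1}"
      define xs where "xs = 0 # hs @ [0]"
      have xs: "xs \<noteq> []" "last xs = 0" "hd xs = 0" "length xs - 1 = l"
        unfolding xs_def using hs False by auto
      have vt: "vac_term e1 e2 l hs Pi = lax_chain e1 e2 xs Pi"
        unfolding vac_term_def xs_def using False by simp
      define H where "H = Max (set xs)"
      have "fbnd hb (\<lambda>m. omega (1 / \<tau>\<^sup>2) K 0 (grade m + last xs)) Pi CP"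
        using P xs(2) q by (simp add: omega_def)
      then have Ch: "fbnd hb (\<lambda>m. omega (1 / \<tau>\<^sup>2) K l (grade m)) (lax_chain e1 e2 xs Pi) CP"
        using chain_bnd[of e1 e2 K "1 / \<tau>\<^sup>2" xs Pi CP] hb xs unfolding hb_def K_def
        by simp
      have Sp: "supp_ge H (lax_chain e1 e2 xs Pi)"
        using chain_supp[OF xs(1), of e1 e2 Pi] xs(3) unfolding H_def by simp
      have "fbnd hb (\<lambda>_. 1) (lax_chain e1 e2 xs Pi) (K ^ l * D0 * \<tau> ^ H * CP)"
      proof (rule fbnd_weaken[OF hb Ch])
        show "0 \<le> K ^ l * D0 * \<tau> ^ H" using K D00 t by simp
        fix m assume m: "m \<in> fock_idx" "lax_chain e1 e2 xs Pi m \<noteq> 0"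
        have "H \<le> grade m" using Sp m unfolding supp_ge_def by blast
        then show "1 \<le> K ^ l * D0 * \<tau> ^ H * omega (1 / \<tau>\<^sup>2) K l (grade m)"
          by (rule weight_ineq[OF K t(1,3) D0])
      qed
      moreover have "K ^ l * D0 * \<tau> ^ H * CP \<le> (b hs)\<^sup>2"
      proof -
        have tH: "\<tau> ^ H \<le> (\<gamma> ^ sum_list hs)\<^sup>2"
        proof (cases "n = 0")
          case True
          then have "hs = []" using hs n_def by simp
          then have "H = 0" unfolding H_def xs_def by simp
          then show ?thesis using \<open>hs = []\<close> by simp
        next
          case n0: False
          have gp: "\<gamma> ^ (2 * n) = \<tau>" unfolding \<gamma>_def using n0 t by simp
          have le: "sum_list hs \<le> n * H"
          proof -
            have "\<forall>x\<in>set hs. x \<le> H" unfolding H_def xs_def by simp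
            then show ?thesis using sum_list_le[of hs H] hs n_def by simp
          qed
          have "\<tau> ^ H = \<gamma> ^ (2 * n * H)" using gp by (simp add: power_mult)
          also have "\<dots> \<le> \<gamma> ^ (2 * sum_list hs)"
            by (rule power_decreasing) (use le g in simp_all)
          also have "\<dots> = (\<gamma> ^ sum_list hs)\<^sup>2" by (simp add: power_mult[symmetric] mult.commute)
          finally show ?thesis .
        qed
        have "K ^ l * D0 * \<tau> ^ H * CP \<le> K ^ l * D0 * (\<gamma> ^ sum_list hs)\<^sup>2 * CP"
          using tH K D00 CP0 by (intro mult_right_mono mult_left_mono) simp_all
        also have "\<dots> = (b hs)\<^sup>2" unfolding b_def using K D00 CP0
          by (simp add: power_mult_distrib)
        finally show ?thesis .
      qed
      ultimately show "fbnd hb (\<lambda>_. 1) (vac_term e1 e2 l hs Pi) ((b hs)\<^sup>2)"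
        unfolding vt by (rule fbnd_mono_B)
    qed
  qed
  then show "in_vac_domain e1 e2 l (stanley_cauchy (- e1 * e2) vin)"
    unfolding in_vac_domain_def using inP unfolding Pi_def hb_def by blast
qed

end
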